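(* Let $(t_k)_{k\in\mathbb{N}}$ be a strictly increasing sequence with $t_1=\pi/4$ and $t_k\to\pi/2$. In $\mathbb{R}^3$ let $C_1=\mathrm{co}\{(-2,2,1),(-2,2,-1)\}$, $C_2=\mathrm{co}\{(2,2,1),(2,2,-1)\}$ and $C_3=\overline{\mathrm{co}}\{(\cos t_k,\sin t_k,(-1)^k): k\in\mathbb{N}\}$, and let $C_1'=\{(-2,2)\}$, $C_2'=\{(2,2)\}$, $C_3'=\overline{\mathrm{co}}\{(\cos t_k,\sin t_k):k\in\mathbb{N}\}\subseteq\mathbb{R}^2$ be their projections onto the $xy$-plane. Then for each $\varepsilon\in(0,1)$ there exists a unique $\varepsilon$-cycle $(u_1,u_2,u_3)$ for $C_1,C_2,C_3$, and there exists a unique $\varepsilon$-cycle $(u_1',u_2',u_3')$ for $C_1',C_2',C_3'$.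
   Context: For a nonempty closed convex set $C$ in a Euclidean space, $\Pi_C(u)$ denotes the Euclidean projection of $u$ onto $C$. For three nonempty closed convex sets $D_1,D_2,D_3$ and $\varepsilon\in(0,1]$, an $\varepsilon$-cycle is a triple $(u_1,u_2,u_3)$ with $u_1=u_3+\varepsilon(\Pi_{D_1}(u_3)-u_3)$, $u_2=u_1+\varepsilon(\Pi_{D_2}(u_1)-u_1)$, $u_3=u_2+\varepsilon(\Pi_{D_3}(u_2)-u_2)$. $\mathrm{co}$ denotes convex hull and $\overline{\mathrm{co}}$ closed convex hull. *)

theory Defs
  imports "HOL-Analysis.Analysis"
begin

text \<open>Euclidean projection onto a nonempty closed convex set is the library's closest_point.
  An eps-cycle for D1 D2 D3 is a triple (u1,u2,u3) satisfying the three relaxed projection equations.\<close>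

definition eps_cycle :: "'a::euclidean_space set \<Rightarrow> 'a set \<Rightarrow> 'a set \<Rightarrow> real \<Rightarrow> 'a \<times> 'a \<times> 'a \<Rightarrow> bool" where
  "eps_cycle D1 D2 D3 \<epsilon> u \<longleftrightarrow>
     (case u of (u1, u2, u3) \<Rightarrow>
        u1 = u3 + \<epsilon> *\<^sub>R (closest_point D1 u3 - u3) \<and>
        u2 = u1 + \<epsilon> *\<^sub>R (closest_point D2 u1 - u1) \<and>
        u3 = u2 + \<epsilon> *\<^sub>R (closest_point D3 u2 - u2))"

end

theory Submission
  imports Defs
begin


definition relax :: "'a::euclidean_space set \<Rightarrow> real \<Rightarrow> 'a \<Rightarrow> 'a" where
  "relax D e x = x + e *\<^sub>R (closest_point D x - x)"

lemma avg_ineq: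
  fixes a b :: "'a::real_inner"
  assumes "norm b \<le> norm a" "0 \<le> e"
  shows "(norm ((1 - e) *\<^sub>R a + e *\<^sub>R b))^2 \<le> (norm a)^2 - e * (1 - e) * (norm (a - b))^2"
proof -
  have bb: "inner b b \<le> inner a a" using assms(1) by (simp add: norm_le)
  have 1: "(norm ((1 - e) *\<^sub>R a + e *\<^sub>R b))^2 = (1-e)*(1-e) * inner a a + 2*e*(1-e)*inner a b + e*e*inner b b"
    by (simp add: power2_norm_eq_inner inner_add inner_commute algebra_simps)
  have 2: "(norm (a - b))^2 = inner a a - 2 * inner a b + inner b b"
    by (simp add: power2_norm_eq_inner inner_diff inner_commute algebra_simps)
  have 3: "(norm a)^2 = inner a a" by (simp add: power2_norm_eq_inner)
  have "0 \<le> e * (inner a a - inner b b)" using bb assms(2) by simp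
  then show ?thesis unfolding 1 2 3 by (simp add: algebra_simps)
qed

lemma relax_firm:
  fixes D :: "'a::euclidean_space set"
  assumes "convex D" "closed D" "D \<noteq> {}" "0 \<le> e"
  shows "(norm (relax D e x - relax D e y))^2 \<le> (norm (x - y))^2
           - e * (1 - e) * (norm ((x - y) - (closest_point D x - closest_point D y)))^2"
proof -
  have nb: "norm (closest_point D x - closest_point D y) \<le> norm (x - y)"
    using closest_point_lipschitz[OF assms(1-3), of x y] by (simp add: dist_norm)
  have eq: "relax D e x - relax D e y = (1 - e) *\<^sub>R (x - y) + e *\<^sub>R (closest_point D x - closest_point D y)"
    by (simp add: relax_def algebra_simps)
  show ?thesis unfolding eq by (rule avg_ineq[OF nb assms(4)])
qed

lemma eps_cycle_relax:
  "eps_cycle D1 D2 D3 e (u1, u2, u3) \<longleftrightarrow>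
     u1 = relax D1 e u3 \<and> u2 = relax D2 e u1 \<and> u3 = relax D3 e u2"
  by (simp add: eps_cycle_def relax_def)

lemma cycle_diff:
  fixes D1 D2 D3 :: "'a::euclidean_space set"
  assumes D1: "convex D1" "closed D1" "D1 \<noteq> {}"
    and D2: "convex D2" "closed D2" "D2 \<noteq> {}"
    and D3: "convex D3" "closed D3" "D3 \<noteq> {}"
    and e: "0 < e" "e < 1"
    and u: "eps_cycle D1 D2 D3 e (u1, u2, u3)"
    and v: "eps_cycle D1 D2 D3 e (v1, v2, v3)"
  shows "closest_point D1 u3 - closest_point D1 v3 = u3 - v3"
    "closest_point D2 u1 - closest_point D2 v1 = u1 - v1"
    "closest_point D3 u2 - closest_point D3 v2 = u2 - v2"
    "u1 - v1 = u3 - v3" "u2 - v2 = u1 - v1"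
proof -
  have u': "u1 = relax D1 e u3" "u2 = relax D2 e u1" "u3 = relax D3 e u2"
    using u[unfolded eps_cycle_relax] by blast+
  have v': "v1 = relax D1 e v3" "v2 = relax D2 e v1" "v3 = relax D3 e v2"
    using v[unfolded eps_cycle_relax] by blast+
  define c where "c = e * (1 - e)"
  have c: "c > 0" using e by (simp add: c_def)
  define e1 where "e1 = (norm ((u3 - v3) - (closest_point D1 u3 - closest_point D1 v3)))^2"
  define e2 where "e2 = (norm ((u1 - v1) - (closest_point D2 u1 - closest_point D2 v1)))^2"
  define e3 where "e3 = (norm ((u2 - v2) - (closest_point D3 u2 - closest_point D3 v2)))^2"
  have i1: "(norm (u1 - v1))^2 \<le> (norm (u3 - v3))^2 - c * e1"
    unfolding u'(1) v'(1) c_def e1_def using relax_firm[OF D1] e by simp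
  have i2: "(norm (u2 - v2))^2 \<le> (norm (u1 - v1))^2 - c * e2"
    unfolding u'(2) v'(2) c_def e2_def using relax_firm[OF D2] e by simp
  have i3: "(norm (u3 - v3))^2 \<le> (norm (u2 - v2))^2 - c * e3"
    unfolding c_def e3_def using relax_firm[OF D3, of e u2 v2] e u'(3) v'(3) by simp
  have "c * e1 \<ge> 0" "c * e2 \<ge> 0" "c * e3 \<ge> 0" using c by (simp_all add: e1_def e2_def e3_def)
  then have "c * e1 = 0" "c * e2 = 0" "c * e3 = 0" using i1 i2 i3 by linarith+
  then have "e1 = 0" "e2 = 0" "e3 = 0" using c by simp_all
  then show d1: "closest_point D1 u3 - closest_point D1 v3 = u3 - v3"
    and d2: "closest_point D2 u1 - closest_point D2 v1 = u1 - v1"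
    and d3: "closest_point D3 u2 - closest_point D3 v2 = u2 - v2"
    by (simp_all add: e1_def e2_def e3_def)
  show "u1 - v1 = u3 - v3"
  proof -
    have "u1 - v1 = (u3 - v3) + e *\<^sub>R ((closest_point D1 u3 - closest_point D1 v3) - (u3 - v3))"
      unfolding u'(1) v'(1) relax_def by (simp add: algebra_simps)
    then show ?thesis using d1 by simp
  qed
  show "u2 - v2 = u1 - v1"
  proof -
    have "u2 - v2 = (u1 - v1) + e *\<^sub>R ((closest_point D2 u1 - closest_point D2 v1) - (u1 - v1))"
      unfolding u'(2) v'(2) relax_def by (simp add: algebra_simps)
    then show ?thesis using d2 by simp
  qed
qed

lemma relax_cball:
  fixes D :: "'a::euclidean_space set"
  assumes "closed D" "D \<noteq> {}" "D \<subseteq> cball 0 r" "0 \<le> e" "e \<le> 1" "x \<in> cball 0 r"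
  shows "relax D e x \<in> cball 0 r"
proof -
  have p: "norm (closest_point D x) \<le> r"
    using closest_point_in_set[OF assms(1,2), of x] assms(3) by auto
  have "relax D e x = (1 - e) *\<^sub>R x + e *\<^sub>R closest_point D x"
    by (simp add: relax_def algebra_simps)
  then have "norm (relax D e x) \<le> (1 - e) * norm x + e * norm (closest_point D x)"
    using assms(4,5) norm_triangle_ineq[of "(1 - e) *\<^sub>R x" "e *\<^sub>R closest_point D x"] by simp
  also have "\<dots> \<le> (1 - e) * r + e * r"
    using assms(4,5,6) p by (intro add_mono mult_left_mono) auto
  finally show ?thesis by (simp add: algebra_simps)
qed

lemma cycle_exists:
  fixes D1 D2 D3 :: "'a::euclidean_space set"
  assumes D1: "convex D1" "closed D1" "D1 \<noteq> {}" "bounded D1"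
    and D2: "convex D2" "closed D2" "D2 \<noteq> {}" "bounded D2"
    and D3: "convex D3" "closed D3" "D3 \<noteq> {}" "bounded D3"
    and e: "0 \<le> e" "e \<le> 1"
  shows "\<exists>u. eps_cycle D1 D2 D3 e u"
proof -
  have "bounded (D1 \<union> D2 \<union> D3)" using D1(4) D2(4) D3(4) by simp
  then obtain r where r0: "r > 0" "\<forall>x\<in>D1 \<union> D2 \<union> D3. norm x \<le> r"
    unfolding bounded_pos by blast
  have r: "r > 0" "D1 \<union> D2 \<union> D3 \<subseteq> cball 0 r" using r0 by auto
  define T where "T = (\<lambda>x. relax D3 e (relax D2 e (relax D1 e x)))"
  have cont: "continuous_on (cball 0 r) T"
  proof -
    have c: "continuous_on S (relax D e)" if "convex D" "closed D" "D \<noteq> {}" for D S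
      unfolding relax_def by (intro continuous_intros continuous_on_closest_point that)
    show ?thesis unfolding T_def
      by (rule continuous_on_compose2[OF c[OF D3(1-3)] continuous_on_compose2[OF c[OF D2(1-3)] c[OF D1(1-3)]]]) auto
  qed
  have "T \<in> cball 0 r \<rightarrow> cball 0 r"
  proof
    fix x :: 'a assume x: "x \<in> cball 0 r"
    have s1: "D1 \<subseteq> cball 0 r" "D2 \<subseteq> cball 0 r" "D3 \<subseteq> cball 0 r" using r(2) by auto
    show "T x \<in> cball 0 r" unfolding T_def
      by (rule relax_cball[OF D3(2,3) s1(3) e relax_cball[OF D2(2,3) s1(2) e relax_cball[OF D1(2,3) s1(1) e x]]])
  qed
  then obtain x where "T x = x" using brouwer_ball[OF r(1) cont] by auto
  then have "eps_cycle D1 D2 D3 e (relax D1 e x, relax D2 e (relax D1 e x), x)"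
    by (simp add: eps_cycle_relax T_def)
  then show ?thesis by blast
qed



lemma hull_closure_sub:
  "G \<subseteq> S \<Longrightarrow> convex S \<Longrightarrow> closed S \<Longrightarrow> closure (convex hull G) \<subseteq> S"
  by (meson closure_minimal hull_minimal)

lemma inner3: "inner (vector [c1, c2, c3] :: real^3) w = c1 * w$1 + c2 * w$2 + c3 * w$3"
  by (simp add: inner_vec_def sum_3)

lemma halfsp3:
  shows "convex {w::real^3. c1 * w$1 + c2 * w$2 + c3 * w$3 \<le> c0}"
    and "closed {w::real^3. c1 * w$1 + c2 * w$2 + c3 * w$3 \<le> c0}"
proof -
  have eq: "{w::real^3. c1 * w$1 + c2 * w$2 + c3 * w$3 \<le> c0} = {w. inner (vector [c1, c2, c3]) w \<le> c0}"
    by (simp add: inner3)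
  show "convex {w::real^3. c1 * w$1 + c2 * w$2 + c3 * w$3 \<le> c0}" unfolding eq by (rule convex_halfspace_le)
  show "closed {w::real^3. c1 * w$1 + c2 * w$2 + c3 * w$3 \<le> c0}" unfolding eq by (rule closed_halfspace_le)
qed

lemma rolle_trig:
  fixes a b n1 n2 :: real
  assumes "a < b" "n1 * cos a + n2 * sin a = n1 * cos b + n2 * sin b"
  shows "\<exists>z. a < z \<and> z < b \<and> n2 * cos z - n1 * sin z = 0"
proof -
  define f where "f = (\<lambda>x::real. n1 * cos x + n2 * sin x)"
  have d: "\<And>x. DERIV f x :> (n2 * cos x - n1 * sin x)"
    unfolding f_def by (auto intro!: derivative_eq_intros)
  have "\<exists>z. a < z \<and> z < b \<and> DERIV f z :> 0"
  proof (rule Rolle)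
    show "continuous_on {a..b} f" unfolding f_def by (intro continuous_intros)
    show "f differentiable (at x)" for x using d real_differentiable_def by blast
  qed (use assms in \<open>auto simp: f_def\<close>)
  then obtain z where "a < z" "z < b" "DERIV f z :> 0" by blast
  then have "n2 * cos z - n1 * sin z = 0" using DERIV_unique[OF d[of z]] by blast
  then show ?thesis using \<open>a < z\<close> \<open>z < b\<close> by blast
qed

lemma crit_unique:
  fixes a b n1 n2 :: real
  assumes "0 < a" "a < b" "b < pi/2" "n2 > 0"
    "n2 * cos a - n1 * sin a = 0" "n2 * cos b - n1 * sin b = 0"
  shows False
proof -
  have ca: "cos a > 0" using assms by (intro cos_gt_zero) auto
  have "n1 * (sin b * cos a - cos b * sin a) = 0"
    using assms(5,6) by algebra
  moreover have "sin b * cos a - cos b * sin a = sin (b - a)" by (simp add: sin_diff)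
  moreover have "sin (b - a) > 0" using assms by (intro sin_gt_zero) auto
  ultimately have "n1 = 0" by simp
  then show False using assms(4,5) ca by simp
qed

lemma certificate:
  fixes t :: "nat \<Rightarrow> real" and n1 n2 M :: real and p p' :: "real^3"
  assumes mono: "\<And>i j. 1 \<le> i \<Longrightarrow> i < j \<Longrightarrow> t i < t j"
    and rng: "\<And>k. 1 \<le> k \<Longrightarrow> pi/4 \<le> t k \<and> t k < pi/2"
    and lim: "t \<longlonglongrightarrow> pi/2"
    and n2: "n2 > 0" and Mgt: "M > n2"
    and gen: "\<And>k. 1 \<le> k \<Longrightarrow> n1 * cos (t k) + n2 * sin (t k) \<le> M"
    and pC: "p \<in> closure (convex hull {vector [cos (t k), sin (t k), (-1) ^ k] | k. k \<ge> 1})"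
            "p' \<in> closure (convex hull {vector [cos (t k), sin (t k), (-1) ^ k] | k. k \<ge> 1})"
    and pq: "p$1 = p'$1" "p$2 = p'$2" "n1 * p$1 + n2 * p$2 = M"
  shows "p$3 = p'$3"
proof -
  define f where "f k = n1 * cos (t k) + n2 * sin (t k)" for k
  define z where "z k = ((-1::real) ^ k)" for k
  have zb: "\<bar>z k\<bar> = 1" for k by (simp add: z_def)
  have gen': "\<And>k. 1 \<le> k \<Longrightarrow> f k \<le> M" using gen by (simp add: f_def)
  define K where "K = {k. 1 \<le> k \<and> f k = M}"
  have no3: False if "a \<in> K" "b \<in> K" "c \<in> K" "a < b" "b < c" for a b c
  proof -
    have a1: "1 \<le> a" "1 \<le> b" "1 \<le> c" using that by (auto simp: K_def)
    have ab: "t a < t b" "t b < t c" using mono a1 that by auto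
    have fa: "f a = f b" "f b = f c" using that by (auto simp: K_def)
    obtain z1 where z1: "t a < z1" "z1 < t b" "n2 * cos z1 - n1 * sin z1 = 0"
      using rolle_trig[OF ab(1), of n1 n2] fa(1) by (auto simp: f_def)
    obtain z2 where z2: "t b < z2" "z2 < t c" "n2 * cos z2 - n1 * sin z2 = 0"
      using rolle_trig[OF ab(2), of n1 n2] fa(2) by (auto simp: f_def)
    have "0 < z1" using rng[OF a1(1)] z1(1) pi_gt_zero by linarith
    moreover have "z2 < pi/2" using rng[OF a1(3)] z2(2) by linarith
    moreover have "z1 < z2" using z1 z2 by linarith
    ultimately show False using crit_unique[of z1 z2 n2 n1] z1(3) z2(3) n2 by blast
  qed
  obtain i j where ij: "1 \<le> i" "1 \<le> j" "K \<subseteq> {i, j}"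
  proof (cases "K = {}")
    case True then show ?thesis using that[of 1 1] by auto
  next
    case False
    define i where "i = (LEAST k. k \<in> K)"
    have iK: "i \<in> K" using False LeastI_ex[of "\<lambda>k. k \<in> K"] unfolding i_def by blast
    have imin: "\<And>k. k \<in> K \<Longrightarrow> i \<le> k" unfolding i_def by (rule Least_le)
    show ?thesis
    proof (cases "K \<subseteq> {i}")
      case True then show ?thesis using that[of i i] iK by (auto simp: K_def)
    next
      case False
      then obtain j where jK: "j \<in> K" "j \<noteq> i" by auto
      have "K \<subseteq> {i, j}"
      proof
        fix c assume c: "c \<in> K"
        show "c \<in> {i, j}"
        proof (rule ccontr)
          assume "c \<notin> {i, j}"
          then have "i < c" "i < j" "c \<noteq> j" using imin[OF c] imin[OF jK(1)] jK by auto
          then show False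
          proof (cases "c < j")
            case True then show False using no3[OF iK c jK(1)] \<open>i < c\<close> by blast
          next
            case False then have "j < c" using \<open>c \<noteq> j\<close> by simp
            then show False using no3[OF iK jK(1) c] \<open>i < j\<close> by blast
          qed
        qed
      qed
      then show ?thesis using that[of i j] iK jK by (auto simp: K_def)
    qed
  qed
  obtain al b1 b2 where lm: "\<And>k. k \<in> K \<Longrightarrow> z k = al + b1 * cos (t k) + b2 * sin (t k)"
  proof (cases "i = j")
    case True
    show ?thesis using ij True by (intro that[of "z i" 0 0]) auto
  next
    case False
    define D1 where "D1 = cos (t j) - cos (t i)"
    define D2 where "D2 = sin (t j) - sin (t i)"
    have "D1 \<noteq> 0"
    proof
      assume "D1 = 0"
      then have "cos (t j) = cos (t i)" by (simp add: D1_def)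
      moreover have "0 \<le> t j" "t j \<le> pi" "0 \<le> t i" "t i \<le> pi"
        using rng[OF ij(1)] rng[OF ij(2)] pi_gt_zero by linarith+
      ultimately have "t j = t i" using cos_inj_pi by blast
      moreover have "t i \<noteq> t j" using mono[of i j] mono[of j i] ij False by (cases "i < j") auto
      ultimately show False by simp
    qed
    then have N: "D1^2 + D2^2 > 0" by (simp add: add_pos_nonneg)
    define g where "g = (z j - z i) / (D1^2 + D2^2)"
    define al where "al = z i - g * D1 * cos (t i) - g * D2 * sin (t i)"
    show ?thesis
    proof (rule that[of al "g * D1" "g * D2"])
      fix k assume "k \<in> K"
      then have "k = i \<or> k = j" using ij by auto
      then show "z k = al + g * D1 * cos (t k) + g * D2 * sin (t k)"
      proof
        assume "k = i" then show ?thesis by (simp add: al_def)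
      next
        assume kj: "k = j"
        have "al + g * D1 * cos (t j) + g * D2 * sin (t j) = z i + g * (D1^2 + D2^2)"
          unfolding al_def D1_def D2_def power2_eq_square by (simp only: algebra_simps)
        also have "\<dots> = z j" using N \<open>D1 \<noteq> 0\<close> by (simp add: g_def)
        finally show ?thesis using kj by simp
      qed
    qed
  qed
  have tl: "f \<longlonglongrightarrow> n2"
  proof -
    have "(\<lambda>k. n1 * cos (t k) + n2 * sin (t k)) \<longlonglongrightarrow> n1 * cos (pi/2) + n2 * sin (pi/2)"
      by (intro tendsto_intros lim)
    then show ?thesis by (simp add: f_def[abs_def])
  qed
  have "eventually (\<lambda>k. f k < (M + n2)/2) sequentially"
    using order_tendstoD(2)[OF tl, of "(M + n2)/2"] Mgt by simp
  then obtain N where NN: "\<And>k. k \<ge> N \<Longrightarrow> f k < (M + n2)/2" by (auto simp: eventually_sequentially)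
  define S where "S = {k. 1 \<le> k \<and> k < N \<and> k \<notin> K}"
  have finS: "finite S" by (rule finite_subset[of _ "{..<N}"]) (auto simp: S_def)
  define A where "A = insert ((M - n2)/2) ((\<lambda>k. M - f k) ` S)"
  define eta where "eta = Min A"
  have finA: "finite A" "A \<noteq> {}" using finS by (auto simp: A_def)
  have eta_pos: "eta > 0"
    unfolding eta_def
  proof (subst Min_gr_iff[OF finA])
    show "\<forall>a\<in>A. 0 < a"
    proof
      fix a assume "a \<in> A"
      then consider "a = (M - n2)/2" | k where "k \<in> S" "a = M - f k" by (auto simp: A_def)
      then show "0 < a"
      proof cases
        case 1 then show ?thesis using Mgt by simp
      next
        case 2 then show ?thesis using gen'[of k] by (auto simp: S_def K_def)
      qed
    qed
  qed
  have margin: "eta \<le> M - f k" if "1 \<le> k" "k \<notin> K" for k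
  proof (cases "k < N")
    case True
    then have "M - f k \<in> A" using that by (auto simp: A_def S_def)
    then show ?thesis unfolding eta_def using finA by (intro Min_le) auto
  next
    case False
    then have "f k < (M + n2)/2" using NN by simp
    moreover have "eta \<le> (M - n2)/2" unfolding eta_def using finA by (intro Min_le) (auto simp: A_def)
    ultimately show ?thesis by (simp add: field_simps)
  qed
  define B where "B = 1 + \<bar>al\<bar> + \<bar>b1\<bar> + \<bar>b2\<bar>"
  define C where "C = B / eta"
  have C0: "C \<ge> 0" using eta_pos by (simp add: C_def B_def)
  have bound: "\<bar>z k - (al + b1 * cos (t k) + b2 * sin (t k))\<bar> \<le> C * (M - f k)" if "1 \<le> k" for k
  proof (cases "k \<in> K")
    case True then show ?thesis using lm[OF True] by (simp add: K_def)
  next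
    case False
    have c1: "\<bar>b1 * cos (t k)\<bar> \<le> \<bar>b1\<bar>"
      using mult_left_mono[OF abs_cos_le_one[of "t k"], of "\<bar>b1\<bar>"] by (simp add: abs_mult)
    have c2: "\<bar>b2 * sin (t k)\<bar> \<le> \<bar>b2\<bar>"
      using mult_left_mono[OF abs_sin_le_one[of "t k"], of "\<bar>b2\<bar>"] by (simp add: abs_mult)
    have "\<bar>z k - (al + b1 * cos (t k) + b2 * sin (t k))\<bar> \<le> B"
      using zb[of k] c1 c2 unfolding B_def by linarith
    also have "B = C * eta" using eta_pos by (simp add: C_def)
    also have "C * eta \<le> C * (M - f k)" using margin[OF that False] C0 by (rule mult_left_mono)
    finally show ?thesis .
  qed
  define H1 where "H1 = {w::real^3. (C * n1 - b1) * w$1 + (C * n2 - b2) * w$2 + 1 * w$3 \<le> C * M + al}"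
  define H2 where "H2 = {w::real^3. (C * n1 + b1) * w$1 + (C * n2 + b2) * w$2 + (-1) * w$3 \<le> C * M - al}"
  have GH: "{vector [cos (t k), sin (t k), (-1) ^ k] | k. k \<ge> 1} \<subseteq> H1 \<inter> H2"
  proof
    fix w :: "real^3" assume "w \<in> {vector [cos (t k), sin (t k), (-1) ^ k] | k. k \<ge> 1}"
    then obtain k where k: "1 \<le> k" "w = vector [cos (t k), sin (t k), (-1) ^ k]" by blast
    have bk: "\<bar>z k - (al + b1 * cos (t k) + b2 * sin (t k))\<bar> \<le> C * M - C * n1 * cos (t k) - C * n2 * sin (t k)"
      using bound[OF k(1)] by (simp add: f_def algebra_simps)
    have w: "w$1 = cos (t k)" "w$2 = sin (t k)" "w$3 = z k" by (simp_all add: k(2) z_def)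
    show "w \<in> H1 \<inter> H2" unfolding H1_def H2_def using bk
      by (simp add: w algebra_simps abs_le_iff) linarith
  qed
  have CH: "closure (convex hull {vector [cos (t k), sin (t k), (-1) ^ k] | k. k \<ge> 1}) \<subseteq> H1 \<inter> H2"
    unfolding H1_def H2_def by (rule hull_closure_sub[OF GH[unfolded H1_def H2_def]]) (intro convex_Int closed_Int halfsp3)+
  have eqp: "C * n1 * p$1 + C * n2 * p$2 = C * M" by (subst pq(3)[symmetric]) (simp add: algebra_simps)
  have eqp': "C * n1 * p'$1 + C * n2 * p'$2 = C * M" using eqp pq(1,2) by simp
  have "p \<in> H1" "p \<in> H2" "p' \<in> H1" "p' \<in> H2" using CH pC by auto
  then show ?thesis using eqp eqp' pq(1,2) unfolding H1_def H2_def by (simp add: algebra_simps)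
qed



lemma t_facts:
  fixes t :: "nat \<Rightarrow> real"
  assumes a1: "\<forall>k\<ge>1. t k < t (Suc k)"
    and a2: "t 1 = pi / 4"
    and a3: "t \<longlonglongrightarrow> pi / 2"
  shows "\<And>i j. 1 \<le> i \<Longrightarrow> i < j \<Longrightarrow> t i < t j"
    and "\<And>k. 1 \<le> k \<Longrightarrow> pi/4 \<le> t k \<and> t k < pi/2"
proof -
  have step: "t i < t (i + Suc d)" if "1 \<le> i" for i d
  proof (induction d)
    case 0 then show ?case using a1 that by simp
  next
    case (Suc d)
    have "t (i + Suc d) < t (Suc (i + Suc d))" using a1 that by simp
    then show ?case using Suc by simp
  qed
  show mono: "\<And>i j. 1 \<le> i \<Longrightarrow> i < j \<Longrightarrow> t i < t j"
  proof -
    fix i j :: nat assume "1 \<le> i" "i < j"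
    then obtain d where "j = i + Suc d" by (metis less_iff_Suc_add add_Suc_right)
    then show "t i < t j" using step[OF \<open>1 \<le> i\<close>] by simp
  qed
  define s where "s n = t (n + 1)" for n
  have "incseq s"
    by (rule incseq_SucI) (use a1 in \<open>auto simp: s_def intro: less_imp_le\<close>)
  moreover have "s \<longlonglongrightarrow> pi/2" unfolding s_def by (rule LIMSEQ_ignore_initial_segment[OF a3])
  ultimately have sle: "s n \<le> pi/2" for n by (rule incseq_le)
  fix k :: nat assume k: "1 \<le> k"
  have "pi/4 \<le> t k"
  proof (cases "k = 1")
    case True then show ?thesis using a2 by simp
  next
    case False then show ?thesis using mono[of 1 k] k a2 by simp
  qed
  moreover have "t k < pi/2" using mono[of k "k+1"] k sle[of k] by (simp add: s_def)
  ultimately show "pi/4 \<le> t k \<and> t k < pi/2" by simp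
qed

lemma convex_fiber3: "convex {w::real^3. w$1 = a \<and> w$2 = b}"
  unfolding convex_def by (auto simp flip: distrib_right)

lemma convex_sq: "(u * a + v * b)^2 \<le> u * a^2 + v * (b::real)^2" if "u \<ge> 0" "v \<ge> 0" "u + v = 1" for u v a b
proof -
  have "u * a^2 + v * b^2 - (u * a + v * b)^2 = u * v * (a - b)^2"
    using that(3) unfolding power2_eq_square by algebra
  moreover have "0 \<le> u * v * (a - b)^2" using that by simp
  ultimately show ?thesis by linarith
qed

lemma cyl3:
  shows "convex {w::real^3. (w$1)^2 + (w$2)^2 \<le> 1}"
    and "closed {w::real^3. (w$1)^2 + (w$2)^2 \<le> 1}"
proof -
  show "convex {w::real^3. (w$1)^2 + (w$2)^2 \<le> 1}"
    unfolding convex_def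
  proof (intro allI impI ballI, clarsimp)
    fix x y :: "real^3" and u v :: real
    assume h: "(x$1)^2 + (x$2)^2 \<le> 1" "(y$1)^2 + (y$2)^2 \<le> 1" "0 \<le> u" "0 \<le> v" "u + v = 1"
    have "(u * x$1 + v * y$1)^2 + (u * x$2 + v * y$2)^2
          \<le> (u * (x$1)^2 + v * (y$1)^2) + (u * (x$2)^2 + v * (y$2)^2)"
      using convex_sq[OF h(3-5)] by (intro add_mono) auto
    also have "\<dots> = u * ((x$1)^2 + (x$2)^2) + v * ((y$1)^2 + (y$2)^2)" by (simp add: algebra_simps)
    also have "\<dots> \<le> u * 1 + v * 1" using h by (intro add_mono mult_left_mono) auto
    finally show "(u * x$1 + v * y$1)^2 + (u * x$2 + v * y$2)^2 \<le> 1" using h(5) by simp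
  qed
  show "closed {w::real^3. (w$1)^2 + (w$2)^2 \<le> 1}"
    by (intro closed_Collect_le continuous_intros)
qed

lemma n_facts:
  fixes e X1 X2 X3 Y1 Y2 Y3 q1 q2 :: real
  assumes E: "X1 = X3 + e * (-2 - X3)" "X2 = X1 + e * (2 - X1)" "X3 = X2 + e * (q1 - X2)"
      "Y1 = Y3 + e * (2 - Y3)" "Y2 = Y1 + e * (2 - Y1)" "Y3 = Y2 + e * (q2 - Y2)"
  shows "(1 - (1-e)^3) * (X2 - q1) = 2 * e^2 - e * (2 - e) * q1"
    and "(1 - (1-e)^3) * (Y2 - q2) = e * (2 - e) * (2 - q2)"
  using E unfolding power2_eq_square power3_eq_cube by algebra+

lemma M_gt:
  fixes t :: "nat \<Rightarrow> real" and e c n1 n2 q1 q2 M :: real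
  assumes rng: "\<And>k. 1 \<le> k \<Longrightarrow> pi/4 \<le> t k \<and> t k < pi/2"
    and lim: "t \<longlonglongrightarrow> pi/2"
    and e: "0 < e" "e < 1"
    and hn1: "(1 - (1-e)^3) * n1 = 2 * e^2 - e * (2 - e) * q1"
    and hn2: "(1 - (1-e)^3) * n2 = e * (2 - e) * (2 - q2)"
    and cyl: "q1^2 + q2^2 \<le> 1"
    and M: "M = n1 * q1 + n2 * q2"
    and gen: "\<And>k. 1 \<le> k \<Longrightarrow> n1 * cos (t k) + n2 * sin (t k) \<le> M"
  shows "n2 > 0" "M > n2"
proof -
  have q2: "q2 \<le> 1"
  proof (rule ccontr)
    assume "\<not> q2 \<le> 1"
    then have "1 < q2^2" by (intro one_less_power) auto
    then show False using cyl by (smt (verit) zero_le_power2)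
  qed
  have c: "1 - (1-e)^3 > 0"
  proof -
    have "(1-e)^3 < 1" using e by (subst power_less_one_iff) auto
    then show ?thesis by simp
  qed
  have e2: "e * (2 - e) > 0" using e by simp
  have "(1 - (1-e)^3) * n2 > 0" unfolding hn2 using e2 q2 by simp
  then show n2: "n2 > 0" using c by (simp add: zero_less_mult_iff)
  define f where "f k = n1 * cos (t k) + n2 * sin (t k)" for k
  have tl: "f \<longlonglongrightarrow> n2"
  proof -
    have "(\<lambda>k. n1 * cos (t k) + n2 * sin (t k)) \<longlonglongrightarrow> n1 * cos (pi/2) + n2 * sin (pi/2)"
      by (intro tendsto_intros lim)
    then show ?thesis by (simp add: f_def[abs_def])
  qed
  have Mge: "n2 \<le> M"
    by (rule LIMSEQ_le_const2[OF tl]) (use gen in \<open>auto simp: f_def intro!: exI[of _ 1]\<close>)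
  show "M > n2"
  proof (rule ccontr)
    assume "\<not> M > n2"
    then have MM: "M = n2" using Mge by simp
    have bnd: "n1 \<le> n2 * cos (t k)" if k: "1 \<le> k" for k
    proof -
      have tk: "pi/4 \<le> t k" "t k < pi/2" using rng[OF k] by auto
      have cpos: "cos (t k) > 0" using tk pi_gt_zero by (intro cos_gt_zero) linarith+
      have s0: "sin (t k) \<ge> 0" using tk pi_gt_zero by (intro sin_ge_zero) linarith+
      have s1: "sin (t k) \<le> 1" by simp
      have "sin (t k) * sin (t k) \<le> sin (t k) * 1" using s0 s1 by (intro mult_left_mono) auto
      then have cs: "1 - sin (t k) \<le> cos (t k) * cos (t k)"
        using sin_cos_squared_add[of "t k"] by (simp add: power2_eq_square)
      have "n1 * cos (t k) \<le> n2 * (1 - sin (t k))" using gen[OF k] MM by (simp add: algebra_simps)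
      also have "\<dots> \<le> n2 * (cos (t k) * cos (t k))" using cs n2 by (intro mult_left_mono) auto
      finally have "n1 * cos (t k) \<le> (n2 * cos (t k)) * cos (t k)" by (simp add: mult.assoc)
      then show ?thesis using cpos by simp
    qed
    have "(\<lambda>k. n2 * cos (t k)) \<longlonglongrightarrow> n2 * cos (pi/2)" by (intro tendsto_intros lim)
    then have "n1 \<le> n2 * cos (pi/2)"
      by (rule LIMSEQ_le_const) (use bnd in \<open>auto intro!: exI[of _ 1]\<close>)
    then have n1: "n1 \<le> 0" by simp
    have "(1 - (1-e)^3) * n1 \<le> 0" using c n1 by (simp add: mult_nonneg_nonpos)
    then have "2 * e^2 \<le> e * (2 - e) * q1" using hn1 by simp
    moreover have "2 * e^2 > 0" using e by simp
    ultimately have q1: "q1 > 0" using e2 by (smt (verit) mult_nonneg_nonpos less_eq_real_def)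
    have "n1 * q1 \<le> 0" using n1 q1 by (simp add: mult_nonpos_nonneg)
    then have "n2 * q2 \<ge> n2 * 1" using M MM by simp
    then have "q2 \<ge> 1" using n2 by simp
    then have "q2^2 \<ge> 1" by (simp add: one_le_power)
    then have "q1^2 \<le> 0" using cyl by linarith
    then show False using q1 by simp
  qed
qed



lemma G3_bounded: "bounded ({vector [cos (t k), sin (t k), (-1) ^ k] | k. k \<ge> (1::nat)} :: (real^3) set)"
proof -
  have "norm (vector [cos (t k), sin (t k), (-1) ^ k] :: real^3) \<le> 3" for k
  proof -
    have "norm (vector [cos (t k), sin (t k), (-1) ^ k] :: real^3) \<le> \<bar>cos (t k)\<bar> + \<bar>sin (t k)\<bar> + \<bar>(-1::real) ^ k\<bar>"
      using norm_le_l1_cart[of "vector [cos (t k), sin (t k), (-1) ^ k] :: real^3"] by (simp add: sum_3)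
    also have "\<dots> \<le> 3" using abs_cos_le_one[of "t k"] abs_sin_le_one[of "t k"] by (simp add: power_abs del: abs_cos_le_one abs_sin_le_one)
    finally show ?thesis .
  qed
  then show ?thesis unfolding bounded_iff by blast
qed

lemma G2_bounded: "bounded ({vector [cos (t k), sin (t k)] | k. k \<ge> (1::nat)} :: (real^2) set)"
proof -
  have "norm (vector [cos (t k), sin (t k)] :: real^2) \<le> 2" for k
  proof -
    have "norm (vector [cos (t k), sin (t k)] :: real^2) \<le> \<bar>cos (t k)\<bar> + \<bar>sin (t k)\<bar>"
      using norm_le_l1_cart[of "vector [cos (t k), sin (t k)] :: real^2"] by (simp add: sum_2)
    also have "\<dots> \<le> 2" using abs_cos_le_one[of "t k"] abs_sin_le_one[of "t k"] by linarith
    finally show ?thesis .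
  qed
  then show ?thesis unfolding bounded_iff by blast
qed

lemma seg_facts:
  fixes A B :: "'a::euclidean_space"
  shows "convex (convex hull {A, B})" "closed (convex hull {A, B})"
    "convex hull {A, B} \<noteq> {}" "bounded (convex hull {A, B})"
  by (auto simp: convex_convex_hull compact_imp_closed compact_imp_bounded
      compact_convex_hull finite_imp_compact)

lemma clhull_facts:
  fixes G :: "'a::euclidean_space set"
  assumes "G \<noteq> {}" "bounded G"
  shows "convex (closure (convex hull G))" "closed (closure (convex hull G))"
    "closure (convex hull G) \<noteq> {}" "bounded (closure (convex hull G))"
  using assms by (auto simp: convex_closure convex_convex_hull bounded_convex_hull)

lemma uniq3:
  fixes t :: "nat \<Rightarrow> real" and e :: real and u1 u2 u3 v1 v2 v3 :: "real^3"
  defines "C1 \<equiv> convex hull {vector [-2, 2, 1], vector [-2, 2, -1]} :: (real^3) set"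
    and "C2 \<equiv> convex hull {vector [2, 2, 1], vector [2, 2, -1]} :: (real^3) set"
    and "G \<equiv> {vector [cos (t k), sin (t k), (-1) ^ k] | k. k \<ge> 1} :: (real^3) set"
  assumes mono: "\<And>i j. 1 \<le> i \<Longrightarrow> i < j \<Longrightarrow> t i < t j"
    and rng: "\<And>k. 1 \<le> k \<Longrightarrow> pi/4 \<le> t k \<and> t k < pi/2"
    and lim: "t \<longlonglongrightarrow> pi/2"
    and e: "0 < e" "e < 1"
    and u: "eps_cycle C1 C2 (closure (convex hull G)) e (u1, u2, u3)"
    and v: "eps_cycle C1 C2 (closure (convex hull G)) e (v1, v2, v3)"
  shows "(u1, u2, u3) = (v1, v2, v3)"
proof -
  define C3 where "C3 = closure (convex hull G)"
  have GC: "G \<subseteq> C3" unfolding C3_def by (rule subset_trans[OF hull_subset closure_subset])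
  have "vector [cos (t 1), sin (t 1), (-1) ^ 1] \<in> G" unfolding G_def by blast
  then have Gne: "G \<noteq> {}" by auto
  have Gb: "bounded G" unfolding G_def by (rule G3_bounded)
  note F1 = seg_facts[of "vector [-2, 2, 1] :: real^3" "vector [-2, 2, -1]", folded C1_def]
  note F2 = seg_facts[of "vector [2, 2, 1] :: real^3" "vector [2, 2, -1]", folded C2_def]
  note F3 = clhull_facts[OF Gne Gb, folded C3_def]
  have u': "eps_cycle C1 C2 C3 e (u1, u2, u3)" "eps_cycle C1 C2 C3 e (v1, v2, v3)"
    using u v by (simp_all add: C3_def)
  note cd = cycle_diff[OF F1(1-3) F2(1-3) F3(1-3) e u'(1) u'(2)]
  have C1sub: "C1 \<subseteq> {w. w$1 = -2 \<and> w$2 = 2}"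
    unfolding C1_def by (rule hull_minimal) (auto simp: convex_fiber3)
  have C2sub: "C2 \<subseteq> {w. w$1 = 2 \<and> w$2 = 2}"
    unfolding C2_def by (rule hull_minimal) (auto simp: convex_fiber3)
  define P1u where "P1u = closest_point C1 u3"
  define P1v where "P1v = closest_point C1 v3"
  define P2u where "P2u = closest_point C2 u1"
  define p where "p = closest_point C3 u2"
  define p' where "p' = closest_point C3 v2"
  have P1u: "P1u$1 = -2" "P1u$2 = 2" using closest_point_in_set[OF F1(2,3), of u3] C1sub by (auto simp: P1u_def)
  have P1v: "P1v$1 = -2" "P1v$2 = 2" using closest_point_in_set[OF F1(2,3), of v3] C1sub by (auto simp: P1v_def)
  have P2u: "P2u$1 = 2" "P2u$2 = 2" using closest_point_in_set[OF F2(2,3), of u1] C2sub by (auto simp: P2u_def)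
  have pC: "p \<in> C3" "p' \<in> C3" using closest_point_in_set[OF F3(2,3)] by (auto simp: p_def p'_def)
  define d where "d = u3 - v3"
  have dd: "d = P1u - P1v" using cd(1) by (simp add: d_def P1u_def P1v_def)
  have d12: "d$1 = 0" "d$2 = 0" unfolding dd using P1u P1v by simp_all
  have ud: "u2 - v2 = d" unfolding d_def using cd(5) cd(4) by (rule trans)
  have pd: "p - p' = d" unfolding p_def p'_def using cd(3) ud by (rule trans)
  have pp: "p' = p - d" by (simp add: pd[symmetric])
  have vv: "v2 = u2 - d" by (simp add: ud[symmetric])
  define n where "n = u2 - p"
  have ip1: "inner (u2 - p) (p' - p) \<le> 0" unfolding p_def by (rule closest_point_dot[OF F3(1,2) pC(2)])
  have ip2: "inner (v2 - p') (p - p') \<le> 0" unfolding p'_def by (rule closest_point_dot[OF F3(1,2) pC(1)])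
  have "inner n d = 0"
  proof -
    have a: "inner n (- d) \<le> 0" using ip1 pp by (simp add: n_def)
    have b: "v2 - p' = n" using vv pp by (simp add: n_def)
    have "inner n d \<le> 0" using ip2 b pp by simp
    then show ?thesis using a by simp
  qed
  then have nd: "n$3 * d$3 = 0" using d12 by (simp add: inner_vec_def sum_3)
  have d3: "d$3 = 0"
  proof (cases "n$3 = 0")
    case False then show ?thesis using nd by simp
  next
    case True
    have gen: "n$1 * cos (t k) + n$2 * sin (t k) \<le> n$1 * p$1 + n$2 * p$2" if k: "1 \<le> k" for k
    proof -
      have gG: "vector [cos (t k), sin (t k), (-1) ^ k] \<in> C3" using GC k unfolding G_def by blast
      have "inner (u2 - p) (vector [cos (t k), sin (t k), (-1) ^ k] - p) \<le> 0"
        unfolding p_def by (rule closest_point_dot[OF F3(1,2) gG])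
      then show ?thesis using True unfolding n_def[symmetric]
        by (simp add: inner_vec_def sum_3 algebra_simps)
    qed
    have E: "u1 = u3 + e *\<^sub>R (P1u - u3)" "u2 = u1 + e *\<^sub>R (P2u - u1)" "u3 = u2 + e *\<^sub>R (p - u2)"
      using u'(1) unfolding eps_cycle_def prod.case P1u_def P2u_def p_def by blast+
    have Ec: "u1$1 = u3$1 + e * (-2 - u3$1)" "u2$1 = u1$1 + e * (2 - u1$1)" "u3$1 = u2$1 + e * (p$1 - u2$1)"
      "u1$2 = u3$2 + e * (2 - u3$2)" "u2$2 = u1$2 + e * (2 - u1$2)" "u3$2 = u2$2 + e * (p$2 - u2$2)"
      using arg_cong[OF E(1), of "\<lambda>w. w$1"] arg_cong[OF E(2), of "\<lambda>w. w$1"] arg_cong[OF E(3), of "\<lambda>w. w$1"]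
        arg_cong[OF E(1), of "\<lambda>w. w$2"] arg_cong[OF E(2), of "\<lambda>w. w$2"] arg_cong[OF E(3), of "\<lambda>w. w$2"]
        P1u P2u by simp_all
    note nf = n_facts[OF Ec]
    have cylC: "C3 \<subseteq> {w::real^3. (w$1)^2 + (w$2)^2 \<le> 1}"
      unfolding C3_def
    proof (rule hull_closure_sub[OF _ cyl3])
      show "G \<subseteq> {w::real^3. (w$1)^2 + (w$2)^2 \<le> 1}" unfolding G_def by auto
    qed
    have cyl: "(p$1)^2 + (p$2)^2 \<le> 1" using cylC pC(1) by auto
    have n12: "n$1 = u2$1 - p$1" "n$2 = u2$2 - p$2" by (simp_all add: n_def)
    have MG: "n$2 > 0" "n$1 * p$1 + n$2 * p$2 > n$2"
      using M_gt[OF rng lim e, of "n$1" "p$1" "n$2" "p$2" "n$1 * p$1 + n$2 * p$2"] nf cyl gen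
      unfolding n12 by auto
    have "p$3 = p'$3"
    proof (rule certificate[OF mono rng lim MG])
      show "\<And>k. 1 \<le> k \<Longrightarrow> n$1 * cos (t k) + n$2 * sin (t k) \<le> n$1 * p$1 + n$2 * p$2" by (rule gen)
      show "p \<in> closure (convex hull {vector [cos (t k), sin (t k), (-1) ^ k] | k. k \<ge> 1})"
        using pC(1) by (simp add: C3_def G_def)
      show "p' \<in> closure (convex hull {vector [cos (t k), sin (t k), (-1) ^ k] | k. k \<ge> 1})"
        using pC(2) by (simp add: C3_def G_def)
      show "p$1 = p'$1" "p$2 = p'$2" using pp d12 by simp_all
    qed simp_all
    then show ?thesis using pp by simp
  qed
  have "d = 0" using d12 d3 by (simp add: vec_eq_iff forall_3)
  then have "u3 = v3" by (simp add: d_def)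
  moreover have "u1 = v1" using cd(4) \<open>u3 = v3\<close> by simp
  moreover have "u2 = v2" using cd(5) \<open>u1 = v1\<close> by simp
  ultimately show ?thesis by simp
qed



theorem proposition2:
  fixes t :: "nat \<Rightarrow> real"
  assumes "\<forall>k\<ge>1. t k < t (Suc k)"
    and "t 1 = pi / 4"
    and "t \<longlonglongrightarrow> pi / 2"
  shows "\<forall>\<epsilon>::real. 0 < \<epsilon> \<and> \<epsilon> < 1 \<longrightarrow>
    (\<exists>!u. eps_cycle
       (convex hull {vector [-2, 2, 1], vector [-2, 2, -1]} :: (real^3) set)
       (convex hull {vector [2, 2, 1], vector [2, 2, -1]})
       (closure (convex hull {vector [cos (t k), sin (t k), (-1) ^ k] | k. k \<ge> 1}))
       \<epsilon> u) \<and>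
    (\<exists>!u. eps_cycle
       ({vector [-2, 2]} :: (real^2) set)
       {vector [2, 2]}
       (closure (convex hull {vector [cos (t k), sin (t k)] | k. k \<ge> 1}))
       \<epsilon> u)"
proof (intro allI impI)
  fix e :: real assume "0 < e \<and> e < 1"
  then have e: "0 < e" "e < 1" by auto
  note tf = t_facts[OF assms]
  define G3 :: "(real^3) set" where "G3 = {vector [cos (t k), sin (t k), (-1) ^ k] | k. k \<ge> 1}"
  define G2 :: "(real^2) set" where "G2 = {vector [cos (t k), sin (t k)] | k. k \<ge> 1}"
  have "vector [cos (t 1), sin (t 1), (-1) ^ 1] \<in> G3" unfolding G3_def by blast
  then have G3ne: "G3 \<noteq> {}" by auto
  have "vector [cos (t 1), sin (t 1)] \<in> G2" unfolding G2_def by blast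
  then have G2ne: "G2 \<noteq> {}" by auto
  have G3b: "bounded G3" unfolding G3_def by (rule G3_bounded)
  have G2b: "bounded G2" unfolding G2_def by (rule G2_bounded)
  note F1 = seg_facts[of "vector [-2, 2, 1] :: real^3" "vector [-2, 2, -1]"]
  note F2 = seg_facts[of "vector [2, 2, 1] :: real^3" "vector [2, 2, -1]"]
  note F3 = clhull_facts[OF G3ne G3b]
  note H3 = clhull_facts[OF G2ne G2b]
  have sing: "convex {a}" "closed {a}" "{a} \<noteq> {}" "bounded {a}" for a :: "real^2" by auto
  have ee: "0 \<le> e" "e \<le> 1" using e by auto
  show "(\<exists>!u. eps_cycle
       (convex hull {vector [-2, 2, 1], vector [-2, 2, -1]} :: (real^3) set)
       (convex hull {vector [2, 2, 1], vector [2, 2, -1]})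
       (closure (convex hull {vector [cos (t k), sin (t k), (-1) ^ k] | k. k \<ge> 1}))
       e u) \<and>
    (\<exists>!u. eps_cycle
       ({vector [-2, 2]} :: (real^2) set)
       {vector [2, 2]}
       (closure (convex hull {vector [cos (t k), sin (t k)] | k. k \<ge> 1}))
       e u)"
    unfolding G3_def[symmetric] G2_def[symmetric]
  proof (intro conjI ex_ex1I)
    show "\<exists>u. eps_cycle (convex hull {vector [-2, 2, 1], vector [-2, 2, -1]} :: (real^3) set)
       (convex hull {vector [2, 2, 1], vector [2, 2, -1]}) (closure (convex hull G3)) e u"
      by (rule cycle_exists[OF F1 F2 F3 ee])
    show "\<exists>u. eps_cycle ({vector [-2, 2]} :: (real^2) set) {vector [2, 2]} (closure (convex hull G2)) e u"
      by (rule cycle_exists[OF sing sing H3 ee])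
  next
    fix u v :: "(real^3) \<times> (real^3) \<times> (real^3)"
    assume u: "eps_cycle (convex hull {vector [-2, 2, 1], vector [-2, 2, -1]} :: (real^3) set)
       (convex hull {vector [2, 2, 1], vector [2, 2, -1]}) (closure (convex hull G3)) e u"
      and v: "eps_cycle (convex hull {vector [-2, 2, 1], vector [-2, 2, -1]} :: (real^3) set)
       (convex hull {vector [2, 2, 1], vector [2, 2, -1]}) (closure (convex hull G3)) e v"
    obtain u1 u2 u3 where uu: "u = (u1, u2, u3)" by (cases u) auto
    obtain v1 v2 v3 where vv: "v = (v1, v2, v3)" by (cases v) auto
    show "u = v" unfolding uu vv
      by (rule uniq3[OF tf(1) tf(2) assms(3) e]) (use u v uu vv in \<open>simp_all add: G3_def\<close>)
  next
    fix u v :: "(real^2) \<times> (real^2) \<times> (real^2)"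
    assume u: "eps_cycle ({vector [-2, 2]} :: (real^2) set) {vector [2, 2]} (closure (convex hull G2)) e u"
      and v: "eps_cycle ({vector [-2, 2]} :: (real^2) set) {vector [2, 2]} (closure (convex hull G2)) e v"
    obtain u1 u2 u3 where uu: "u = (u1, u2, u3)" by (cases u) auto
    obtain v1 v2 v3 where vv: "v = (v1, v2, v3)" by (cases v) auto
    have u': "eps_cycle ({vector [-2, 2]} :: (real^2) set) {vector [2, 2]} (closure (convex hull G2)) e (u1, u2, u3)"
      using u uu by simp
    have v': "eps_cycle ({vector [-2, 2]} :: (real^2) set) {vector [2, 2]} (closure (convex hull G2)) e (v1, v2, v3)"
      using v vv by simp
    note cd = cycle_diff[OF sing(1-3) sing(1-3) H3(1-3) e u' v']
    have cp: "closest_point {a} x = a" for a x :: "real^2"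
      using closest_point_in_set[of "{a}" x] by auto
    have "u3 = v3" using cd(1) by (simp add: cp)
    moreover have "u1 = v1" using cd(4) \<open>u3 = v3\<close> by simp
    moreover have "u2 = v2" using cd(5) \<open>u1 = v1\<close> by simp
    ultimately show "u = v" unfolding uu vv by simp
  qed
qed


end
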